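(* Let $\Theta=(\alpha,\rho_r,\rho_d,\rho_s,\rho_0,T)$ with $\alpha>1$, $\rho_r,\rho_d,\rho_s,\rho_0>0$, $T>1$, and $K_{max}(\Theta):=\min\big(\frac T4,\frac{\rho_r}{3\rho_0},\frac{3\rho_d}{2\rho_0}\big)>10$. Then for every $R>0$: (i) $R<R_{max}(\Theta)\iff \frac{R}{x'(R,\Theta)}<K_{max}(\Theta)\iff K'_{csi}(R,\Theta)<K_{max}(\Theta)$; (ii) $\rho_r<\frac{\alpha}{(1+\rho_d/\rho_r)^2}\frac{g^2(R)}{R}$ holds if and only if $K'_{csi}(R,\Theta)>1$.
   Context: $g(x)=\sqrt{\frac{x}{2^x-1}}\big(2^x x\ln2-2^x+1\big)$, $x>0$. $x'(R,\Theta)>0$ is the unique solution of $g(x')=(1+\rho_d/\rho_r)\sqrt{R\rho_r/\alpha}$. $R_{max}(\Theta)=c(\Theta)K_{max}(\Theta)$ where $c(\Theta)>0$ is the unique positive solution of $g(c)/\sqrt c=(1+\rho_d/\rho_r)\sqrt{K_{max}(\Theta)\rho_r/\alpha}$. For real $M>K\ge1$, $\frac{1}{\zeta_{csi}(M,K,R,\Theta)}=\frac1R\big[\frac{\alpha K}{M-K}(2^{R/K}-1)+M\rho_r+K\rho_d+\rho_s\big]$, and $K'_{csi}(R,\Theta)$ is the $K$-component of the (unique) maximizer of $\zeta_{csi}$ over real $(M,K)$ with $1\le K\le K_{max}(\Theta)$, $M>K$. *)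

theory Defs
  imports "HOL-Analysis.Analysis"
begin

definition g :: "real \<Rightarrow> real" where
  "g x = sqrt (x / (2 powr x - 1)) * (2 powr x * x * ln 2 - 2 powr x + 1)"

definition Kmax :: "real \<Rightarrow> real \<Rightarrow> real \<Rightarrow> real \<Rightarrow> real" where
  "Kmax rho_r rho_d rho_0 T = min (T / 4) (min (rho_r / (3 * rho_0)) (3 * rho_d / (2 * rho_0)))"

definition xprime :: "real \<Rightarrow> real \<Rightarrow> real \<Rightarrow> real \<Rightarrow> real" where
  "xprime alpha rho_r rho_d R =
     (THE x. x > 0 \<and> g x = (1 + rho_d / rho_r) * sqrt (R * rho_r / alpha))"

definition cTheta :: "real \<Rightarrow> real \<Rightarrow> real \<Rightarrow> real \<Rightarrow> real \<Rightarrow> real" where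
  "cTheta alpha rho_r rho_d rho_0 T =
     (THE c. c > 0 \<and> g c / sqrt c =
        (1 + rho_d / rho_r) * sqrt (Kmax rho_r rho_d rho_0 T * rho_r / alpha))"

definition Rmax :: "real \<Rightarrow> real \<Rightarrow> real \<Rightarrow> real \<Rightarrow> real \<Rightarrow> real" where
  "Rmax alpha rho_r rho_d rho_0 T = cTheta alpha rho_r rho_d rho_0 T * Kmax rho_r rho_d rho_0 T"

text \<open>zeta_csi(M,K,R,Theta), via its reciprocal as in the paper.\<close>
definition zeta_csi :: "real \<Rightarrow> real \<Rightarrow> real \<Rightarrow> real \<Rightarrow> real \<Rightarrow> real \<Rightarrow> real \<Rightarrow> real" where
  "zeta_csi alpha rho_r rho_d rho_s M K R =
     1 / ((1 / R) * (alpha * K / (M - K) * (2 powr (R / K) - 1)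
                     + M * rho_r + K * rho_d + rho_s))"

definition csi_feasible :: "real \<Rightarrow> real \<times> real \<Rightarrow> bool" where
  "csi_feasible km p = (1 \<le> snd p \<and> snd p \<le> km \<and> fst p > snd p)"

definition Kcsi :: "real \<Rightarrow> real \<Rightarrow> real \<Rightarrow> real \<Rightarrow> real \<Rightarrow> real \<Rightarrow> real \<Rightarrow> real" where
  "Kcsi alpha rho_r rho_d rho_s rho_0 T R =
     snd (THE p. csi_feasible (Kmax rho_r rho_d rho_0 T) p \<and>
        (\<forall>q. csi_feasible (Kmax rho_r rho_d rho_0 T) q \<longrightarrow>
           zeta_csi alpha rho_r rho_d rho_s (fst q) (snd q) R
             \<le> zeta_csi alpha rho_r rho_d rho_s (fst p) (snd p) R))"

end

theory Submission
  imports Defs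
begin


lemma add_one_lt_exp': assumes "x \<noteq> 0" shows "1 + x < exp (x::real)"
proof (cases "1 + x/2 \<ge> 0")
  case True
  have "1 + x/2 \<le> exp (x/2)" by (rule exp_ge_add_one_self)
  hence "(1 + x/2)^2 \<le> (exp (x/2))^2" using True by (intro power_mono) auto
  also have "(exp (x/2))^2 = exp x" by (simp add: power2_eq_square flip: exp_add)
  finally have "(1+x/2)^2 \<le> exp x" .
  moreover have "(1+x/2)^2 > 1 + x" using assms by (simp add: power2_eq_square field_simps) (metis not_real_square_gt_zero)
  ultimately show ?thesis by simp
next
  case False
  hence "1 + x < 0" by simp
  thus ?thesis using exp_gt_zero[of x] by linarith
qed

definition psi :: "real \<Rightarrow> real" where
  "psi u = (u * exp u - exp u + 1) / sqrt (exp u - 1)"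

lemma N_pos: "u > 0 \<Longrightarrow> u * exp u - exp u + 1 > (0::real)"
proof -
  assume u: "u > 0"
  have "1 - u < exp (-u)" using add_one_lt_exp'[of "-u"] u by simp
  hence "exp u * (1 - u) < exp u * exp (-u)" by simp
  hence "exp u * (1 - u) < 1" by (simp add: exp_minus)
  thus ?thesis by (simp add: algebra_simps)
qed

lemma psi_deriv:
  assumes u: "u > 0"
  shows "(psi has_real_derivative
     ((u * exp u) * sqrt (exp u - 1) - (u * exp u - exp u + 1) * (exp u / (2 * sqrt (exp u - 1))))
       / (sqrt (exp u - 1))^2) (at u)"
proof -
  have e: "exp u - 1 > 0" using u by simp
  show ?thesis unfolding psi_def[abs_def]
    using e
    by (auto intro!: derivative_eq_intros simp: power2_eq_square field_simps)
qed

lemma psi_deriv_pos: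
  assumes u: "u > 0"
  shows "((u * exp u) * sqrt (exp u - 1) - (u * exp u - exp u + 1) * (exp u / (2 * sqrt (exp u - 1))))
       / (sqrt (exp u - 1))^2 > 0"
proof -
  have e: "exp u - 1 > 0" using u by simp
  define s where "s = sqrt (exp u - 1)"
  have s: "s > 0" "s^2 = exp u - 1" using e by (auto simp: s_def)
  have k1: "exp u > 1 + u" using add_one_lt_exp'[of u] u by simp
  have k2: "u * exp u > u * (1 + u)" using k1 u by simp
  have uu: "u * u \<ge> 0" by simp
  have k2': "u * exp u > u + u * u" using k2 by (simp add: algebra_simps)
  have key0: "u * exp u - 2 * u + exp u - 1 > 0" using k1 k2' uu by linarith
  have key: "2 * u * (exp u - 1) > u * exp u - exp u + 1" using key0
    by (simp add: algebra_simps)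
  have "(u * exp u) * s - (u * exp u - exp u + 1) * (exp u / (2 * s))
        = exp u * (2 * u * s^2 - (u * exp u - exp u + 1)) / (2 * s)"
    using s by (simp add: field_simps power2_eq_square)
  also have "\<dots> > 0" using key s by (intro divide_pos_pos mult_pos_pos) auto
  finally show ?thesis using s e unfolding s_def[symmetric] by simp
qed

lemma psi_strict_mono:
  assumes "0 < a" "a < b" shows "psi a < psi b"
  using assms
  by (intro DERIV_pos_imp_increasing[of a b psi]) (auto intro!: exI psi_deriv psi_deriv_pos)

lemma psi_pos: "u > 0 \<Longrightarrow> psi u > 0"
  unfolding psi_def using N_pos[of u] by (auto intro!: divide_pos_pos)

lemma g_eq: assumes x: "x > 0" shows "g x = sqrt x * psi (ln 2 * x)"
proof -
  have p: "2 powr x = exp (ln 2 * x)" by (simp add: powr_def mult.commute)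
  have e: "exp (ln 2 * x) > 1" using x by simp
  hence e': "sqrt (exp (ln 2 * x) - 1) > 0" by simp
  show ?thesis unfolding g_def psi_def p
    using e' by (simp add: real_sqrt_divide divide_simps ac_simps)
qed

lemma phi_eq: "x > 0 \<Longrightarrow> g x / sqrt x = psi (ln 2 * x)"
  by (simp add: g_eq)

lemma g_pos: "x > 0 \<Longrightarrow> g x > 0"
  by (simp add: g_eq psi_pos)

lemma g_strict_mono: assumes "0 < a" "a < b" shows "g a < g b"
proof -
  have l: "ln (2::real) > 0" by simp
  have "psi (ln 2 * a) < psi (ln 2 * b)" using assms l by (intro psi_strict_mono) auto
  moreover have "psi (ln 2 * a) > 0" using assms l by (intro psi_pos) auto
  moreover have "sqrt a < sqrt b" using assms by simp
  ultimately have "sqrt a * psi (ln 2 * a) < sqrt b * psi (ln 2 * b)"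
    using assms by (intro mult_strict_mono) auto
  thus ?thesis using assms by (simp add: g_eq)
qed

lemma phi_strict_mono: assumes "0 < a" "a < b" shows "g a / sqrt a < g b / sqrt b"
proof -
  have l: "ln (2::real) > 0" by simp
  have "psi (ln 2 * a) < psi (ln 2 * b)" using assms l by (intro psi_strict_mono) auto
  thus ?thesis using assms by (simp add: phi_eq)
qed

lemma g_less_iff: "0 < a \<Longrightarrow> 0 < b \<Longrightarrow> g a < g b \<longleftrightarrow> a < b"
  by (metis g_strict_mono linorder_neq_iff order_less_asym)

lemma phi_less_iff: "0 < a \<Longrightarrow> 0 < b \<Longrightarrow> g a / sqrt a < g b / sqrt b \<longleftrightarrow> a < b"
  by (metis phi_strict_mono linorder_neq_iff order_less_asym)

lemma g_cont: "continuous_on {0<..} g"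
proof -
  have "continuous_on {0<..} (\<lambda>x. sqrt (x / (2 powr x - 1)) * (2 powr x * x * ln 2 - 2 powr x + 1))"
    by (intro continuous_intros) auto
  thus ?thesis unfolding g_def[abs_def] .
qed

lemma phi_cont: "continuous_on {0<..} (\<lambda>x. g x / sqrt x)"
  by (intro continuous_intros g_cont) auto



lemma psi_upper: assumes u0: "0 < u" and u1: "u \<le> 1" shows "psi u \<le> u"
proof -
  have h: "1 + u/2 \<le> exp (u/2)" by (rule exp_ge_add_one_self)
  hence "(1 + u/2)^2 \<le> (exp (u/2))^2" using u0 by (intro power_mono) auto
  also have "(exp (u/2))^2 = exp u" by (simp add: power2_eq_square flip: exp_add)
  finally have e1: "1 + u + u^2/4 \<le> exp u" by (simp add: power2_eq_square field_simps)
  have "(1 + u + u^2/4) * (1 - u) \<le> exp u * (1 - u)" using e1 u1 by (intro mult_right_mono) auto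
  moreover have "u^3 \<le> u^2" using u0 u1 by (simp add: power_decreasing)
  moreover have "(1 + u + u^2/4) * (1 - u) = 1 - 3/4*u^2 - u^3/4"
    by (simp add: field_simps power2_eq_square power3_eq_cube)
  ultimately have "1 - u^2 \<le> exp u * (1 - u)" by linarith
  hence N: "u * exp u - exp u + 1 \<le> u^2" by (simp add: algebra_simps)
  have N0: "u * exp u - exp u + 1 > 0" by (rule N_pos[OF u0])
  have e2: "u \<le> exp u - 1" using exp_ge_add_one_self[of u] by linarith
  have s: "sqrt u \<le> sqrt (exp u - 1)" using e2 by simp
  have su: "sqrt u > 0" using u0 by simp
  have "psi u \<le> u^2 / sqrt u" unfolding psi_def
    using N N0 s su by (intro frac_le) auto
  also have "u^2 / sqrt u = u * sqrt u"
    using su u0 by (simp add: field_simps power2_eq_square)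
  also have "\<dots> \<le> u" using u0 u1 by (simp add: mult_left_le)
  finally show ?thesis .
qed

lemma psi_lower: assumes u2: "u \<ge> 2" shows "psi u \<ge> u / 2"
proof -
  have q1: "(u - 2) * exp u \<ge> 0" using u2 by simp
  have q2: "(u - 2) * exp u = u * exp u - 2 * exp u" by (simp add: algebra_simps)
  have N: "u * exp u - exp u + 1 \<ge> exp u" using q1 q2 by linarith
  have d: "sqrt (exp u - 1) \<le> exp (u/2)"
  proof -
    have "sqrt (exp u - 1) \<le> sqrt (exp u)" by simp
    moreover have "exp u = (exp (u/2))^2" by (simp add: power2_eq_square flip: exp_add)
    hence "sqrt (exp u) = exp (u/2)" by simp
    ultimately show ?thesis by simp
  qed
  have dp: "sqrt (exp u - 1) > 0" using u2 by simp
  have N0: "u * exp u - exp u + 1 \<ge> 0" using N exp_gt_zero[of u] by linarith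
  have "exp u / exp (u/2) \<le> psi u" unfolding psi_def
    using N N0 d dp by (intro frac_le) auto
  moreover have "exp u / exp (u/2) = exp (u/2)" by (simp flip: exp_diff)
  moreover have "u/2 < exp (u/2)" by (rule exp_gt_self)
  ultimately show ?thesis by simp
qed


lemma exists_sol:
  fixes f :: "real \<Rightarrow> real"
  assumes c: "continuous_on {0<..} f" and a: "0 < a" "a \<le> b" "f a < v" "v < f b"
  shows "\<exists>x>0. f x = v"
proof -
  have "continuous_on {a..b} f" by (rule continuous_on_subset[OF c]) (use a in auto)
  then obtain x where "a \<le> x" "x \<le> b" "f x = v"
    using IVT'[of f a v b] a by auto
  moreover have "x > 0" using a \<open>a \<le> x\<close> by linarith
  ultimately show ?thesis by blast
qed

lemma small_pt: assumes v: "v > 0"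
  shows "g (min (1/2) (v/2)) < v" "g (min (1/2) (v/2)) / sqrt (min (1/2) (v/2)) < v"
proof -
  define x where "x = min (1/2) (v/2)"
  have x: "0 < x" "x \<le> 1/2" "x < v" using v by (auto simp: x_def)
  have L: "0 < ln (2::real)" "ln (2::real) < 1" using ln_2_less_1 by auto
  define u where "u = ln 2 * x"
  have u: "0 < u" "u \<le> x" using x L by (auto simp: u_def mult_left_le_one_le)
  have pu: "psi u \<le> u" using psi_upper[of u] u x by simp
  have pp: "psi u > 0" using psi_pos u by simp
  have "g x / sqrt x = psi u" unfolding u_def using phi_eq x by simp
  thus "g x / sqrt x < v" using pu u x by simp
  have "g x = sqrt x * psi u" unfolding u_def using g_eq x by simp
  also have "\<dots> \<le> psi u" using x pp by (intro mult_left_le_one_le) auto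
  finally show "g x < v" using pu u x by simp
qed

lemma large_pt: assumes v: "v > 0"
  shows "g ((2 + 2 * v) / ln 2 + 1) > v" "g ((2 + 2 * v) / ln 2 + 1) / sqrt ((2 + 2 * v) / ln 2 + 1) > v"
proof -
  define x where "x = (2 + 2 * v) / ln 2 + 1"
  have L: "0 < ln (2::real)" by simp
  have x1: "x \<ge> 1" unfolding x_def using v L by simp
  define u where "u = ln 2 * x"
  have "u = 2 + 2 * v + ln 2" unfolding u_def x_def using L by (simp add: field_simps)
  hence u: "u \<ge> 2 + 2 * v" using L by simp
  have pu: "psi u \<ge> u / 2" using psi_lower[of u] u v by simp
  have e: "g x / sqrt x = psi u" unfolding u_def using phi_eq x1 by simp
  thus "g x / sqrt x > v" using pu u by simp
  have "g x = sqrt x * psi u" unfolding u_def using g_eq x1 by simp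
  also have "\<dots> \<ge> psi u" using x1 pu u v by (intro mult_le_cancel_right1[THEN iffD2]) auto
  finally show "g x > v" using pu u by simp
qed

lemma sol_aux: "(v::real) > 0 \<Longrightarrow> min (1/2) (v/2) \<le> (2 + 2 * v) / ln 2 + 1"
proof -
  assume v: "v > 0"
  have "(2 + 2 * v) / ln 2 \<ge> 0" using v by simp
  thus ?thesis by linarith
qed

lemma g_sol: "v > 0 \<Longrightarrow> \<exists>!x. x > 0 \<and> g x = v"
proof -
  assume v: "v > 0"
  have "\<exists>x>0. g x = v"
    by (rule exists_sol[OF g_cont _ sol_aux[OF v] small_pt(1)[OF v] large_pt(1)[OF v]]) (use v in auto)
  thus ?thesis using g_less_iff by (metis linorder_neq_iff order_less_irrefl)
qed

lemma phi_sol: "v > 0 \<Longrightarrow> \<exists>!x. x > 0 \<and> g x / sqrt x = v"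
proof -
  assume v: "v > 0"
  have "\<exists>x>0. g x / sqrt x = v"
    by (rule exists_sol[OF phi_cont _ sol_aux[OF v] small_pt(2)[OF v] large_pt(2)[OF v]]) (use v in auto)
  thus ?thesis using phi_less_iff by (metis linorder_neq_iff order_less_irrefl)
qed



lemma sq_less: "(a::real) > 0 \<Longrightarrow> b > 0 \<Longrightarrow> a < b \<longleftrightarrow> a^2 < b^2"
  by (metis abs_of_pos power2_less_imp_less power_strict_mono less_imp_le zero_less_two pos2)
lemma t2: fixes B al R rr G :: real assumes "B > 0" "al > 0" "R > 0"
  shows "B * (R * rr / al) < G \<longleftrightarrow> rr < al / B * G / R"
proof -
  have "B * (R * rr / al) < G \<longleftrightarrow> B * R * rr < G * al" using assms by (simp add: pos_divide_less_eq mult.assoc)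
  also have "\<dots> \<longleftrightarrow> rr * (B * R) < al * G" by (simp add: mult_ac)
  also have "\<dots> \<longleftrightarrow> rr < (al * G) / (B * R)" using assms by (simp add: pos_less_divide_eq)
  also have "(al * G) / (B * R) = al / B * G / R" by simp
  finally show ?thesis .
qed

context
  fixes al rr rd rs km R :: real
  assumes al: "al > 0" and rr: "rr > 0" and rd: "rd > 0" and rs: "rs > 0"
    and km: "km > 1" and R: "R > 0"
begin

definition "c0 = (1 + rd / rr) * sqrt (R * rr / al)"
definition "xp = (THE x. x > 0 \<and> g x = c0)"
definition "AA k = al * k * (2 powr (R / k) - 1)"
definition "DD M k = al * k / (M - k) * (2 powr (R / k) - 1) + M * rr + k * rd + rs"
definition "hh k = 2 * sqrt (AA k * rr) + k * rr + k * rd + rs"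
definition "hdv k = sqrt (al * rr / R) * (c0 - g (R / k))"

lemma c0_pos: "c0 > 0"
  unfolding c0_def using al rr rd R by (intro mult_pos_pos) (auto simp: add_pos_pos)

lemma xp: "xp > 0" "g xp = c0"
proof -
  have "\<exists>!x. x > 0 \<and> g x = c0" by (rule g_sol[OF c0_pos])
  hence "xp > 0 \<and> g xp = c0" unfolding xp_def by (rule theI')
  thus "xp > 0" "g xp = c0" by auto
qed

lemma AA_pos: "k > 0 \<Longrightarrow> AA k > 0"
  unfolding AA_def using al R by (intro mult_pos_pos) auto

lemma sqc0: "sqrt (al * rr / R) * c0 = rr + rd"
proof -
  have "sqrt (al * rr / R) * sqrt (R * rr / al) = sqrt ((al * rr / R) * (R * rr / al))"
    by (simp only: real_sqrt_mult)
  also have "(al * rr / R) * (R * rr / al) = rr^2" using al R by (simp add: field_simps power2_eq_square)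
  also have "sqrt (rr^2) = rr" using rr by simp
  finally show ?thesis unfolding c0_def using rr
    by (simp add: field_simps)
qed

lemma pw2: "(2::real) powr y = exp (y * ln 2)" by (simp add: powr_def)

lemma pw_deriv:
  assumes k: "k > 0"
  shows "((\<lambda>k. 2 powr (R / k)) has_real_derivative 2 powr (R / k) * ln 2 * (- R / k^2)) (at k)"
  unfolding pw2
  using k
  apply (auto intro!: derivative_eq_intros simp: power2_eq_square)
  done

lemma hh_deriv0:
  assumes k: "k > 0"
  shows "(hh has_real_derivative
      al * rr * (2 powr (R / k) - 1 - R / k * 2 powr (R / k) * ln 2) / sqrt (al * k * (2 powr (R / k) - 1) * rr) + rr + rd) (at k)"
proof -
  define Pf where "Pf = (\<lambda>k::real. 2 powr (R / k))"
  have e: "hh = (\<lambda>k. 2 * sqrt (al * k * (Pf k - 1) * rr) + k * rr + k * rd + rs)"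
    unfolding hh_def[abs_def] AA_def Pf_def by (simp add: mult_ac)
  have dP: "(Pf has_real_derivative Pf k * ln 2 * (- R / k^2)) (at k)"
    unfolding Pf_def using pw_deriv[OF k] .
  have P1: "Pf k > 1" unfolding Pf_def using R k by simp
  have pos: "al * k * (Pf k - 1) * rr > 0" using P1 al rr k by simp
  have "((\<lambda>k. 2 * sqrt (al * k * (Pf k - 1) * rr) + k * rr + k * rd + rs) has_real_derivative
      al * rr * (Pf k - 1 - R / k * Pf k * ln 2) / sqrt (al * k * (Pf k - 1) * rr) + rr + rd) (at k)"
    using pos k
    apply (auto intro!: derivative_eq_intros dP simp: field_simps power2_eq_square)
    subgoal
  proof -
    have "sqrt (al * (k * (rr * Pf k)) - al * (k * rr)) \<noteq> 0" using pos al rr k P1 by (simp add: algebra_simps)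
    thus ?thesis using k by (simp add: field_simps)
  qed
  done
  thus ?thesis unfolding e Pf_def by simp
qed

lemma hh_deriv:
  assumes k: "k > 0"
  shows "(hh has_real_derivative hdv k) (at k)"
proof -
  define P where "P = 2 powr (R / k)"
  define x where "x = R / k"
  have P1: "P > 1" unfolding P_def using R k by simp
  have x: "x > 0" unfolding x_def using R k by simp
  define s where "s = sqrt (al * rr)"
  define q where "q = sqrt (k * (P - 1))"
  have s: "s > 0" "s^2 = al * rr" unfolding s_def using al rr by auto
  have q: "q > 0" unfolding q_def using P1 k by auto
  have e1: "sqrt (al * k * (P - 1) * rr) = s * q"
    unfolding s_def q_def by (simp add: real_sqrt_mult[symmetric] mult_ac)
  have "sqrt (al * rr / R) * sqrt (x / (P - 1)) = sqrt (al * rr / R * (x / (P - 1)))"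
    by (simp only: real_sqrt_mult)
  also have "al * rr / R * (x / (P - 1)) = (al * rr) / (k * (P - 1))"
    unfolding x_def using R k P1 by (simp add: field_simps)
  also have "sqrt \<dots> = s / q" unfolding s_def q_def by (simp add: real_sqrt_divide)
  finally have e2: "sqrt (al * rr / R) * sqrt (x / (P - 1)) = s / q" .
  have gx: "g x = sqrt (x / (P - 1)) * (P * x * ln 2 - P + 1)"
    unfolding g_def P_def x_def ..
  have "hdv k = rr + rd - sqrt (al * rr / R) * g x"
    unfolding hdv_def x_def using sqc0 by (simp add: algebra_simps)
  also have "\<dots> = rr + rd - (s / q) * (P * x * ln 2 - P + 1)"
    unfolding gx e2[symmetric] by (simp add: mult_ac)
  also have "\<dots> = al * rr * (P - 1 - x * P * ln 2) / sqrt (al * k * (P - 1) * rr) + rr + rd"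
    unfolding e1 s(2)[symmetric] using s q by (simp add: field_simps power2_eq_square)
  finally have "hdv k = al * rr * (P - 1 - R / k * P * ln 2) / sqrt (al * k * (P - 1) * rr) + rr + rd"
    unfolding x_def .
  thus ?thesis using hh_deriv0[OF k] unfolding P_def by simp
qed

lemma hdv_pos_iff: "k > 0 \<Longrightarrow> hdv k > 0 \<longleftrightarrow> k > R / xp"
proof -
  assume k: "k > 0"
  have sp: "sqrt (al * rr / R) > 0" using al rr R by simp
  have "hdv k > 0 \<longleftrightarrow> g (R / k) < g xp" unfolding hdv_def using sp xp
    by (simp add: zero_less_mult_iff)
  also have "\<dots> \<longleftrightarrow> R / k < xp" using k R xp by (intro g_less_iff) auto
  also have "\<dots> \<longleftrightarrow> R / xp < k" using k xp by (simp add: field_simps)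
  finally show ?thesis .
qed

lemma hdv_neg_iff: "k > 0 \<Longrightarrow> hdv k < 0 \<longleftrightarrow> k < R / xp"
proof -
  assume k: "k > 0"
  have sp: "sqrt (al * rr / R) > 0" using al rr R by simp
  have "hdv k < 0 \<longleftrightarrow> g xp < g (R / k)" unfolding hdv_def using sp xp
    by (simp add: mult_less_0_iff)
  also have "\<dots> \<longleftrightarrow> xp < R / k" using k R xp by (intro g_less_iff) auto
  also have "\<dots> \<longleftrightarrow> k < R / xp" using k xp by (simp add: field_simps)
  finally show ?thesis .
qed

definition "K0 = max 1 (min (R / xp) km)"

lemma K0_range: "1 \<le> K0" "K0 \<le> km" using km unfolding K0_def by auto

lemma hh_min:
  assumes k1: "1 \<le> k" and k2: "k \<le> km" and ne: "k \<noteq> K0"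
  shows "hh K0 < hh k"
proof (cases "K0 < k")
  case True
  have "K0 < km" using True k2 by simp
  hence Kge: "R / xp \<le> K0" unfolding K0_def by (auto simp: min_def split: if_splits)
  obtain z where z: "K0 < z" "z < k" "hh k - hh K0 = (k - K0) * hdv z"
    using MVT2[OF True, of hh hdv] hh_deriv K0_range by force
  have "hdv z > 0" using z Kge K0_range by (subst hdv_pos_iff) auto
  hence "(k - K0) * hdv z > 0" using True by simp
  thus ?thesis using z by simp
next
  case False
  hence lt: "k < K0" using ne by simp
  hence "1 < K0" using k1 by simp
  hence Kle: "K0 \<le> R / xp" unfolding K0_def by (auto simp: min_def split: if_splits)
  obtain z where z: "k < z" "z < K0" "hh K0 - hh k = (K0 - k) * hdv z"
    using MVT2[OF lt, of hh hdv] hh_deriv k1 by force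
  have "hdv z < 0" using z Kle k1 by (subst hdv_neg_iff) auto
  hence "(K0 - k) * hdv z < 0" using lt by (simp add: mult_pos_neg)
  thus ?thesis using z by simp
qed

lemma DD_eq: "DD M k = AA k / (M - k) + M * rr + k * rd + rs"
  unfolding DD_def AA_def by (simp add: field_simps)

lemma amgm:
  fixes A t r :: real
  assumes A: "A > 0" and t: "t > 0" and r: "r > 0"
  shows "A / t + r * t - 2 * sqrt (A * r) = (sqrt A - sqrt r * t)^2 / t"
proof -
  have "(sqrt A - sqrt r * t)^2 = A - 2 * sqrt (A * r) * t + r * t^2"
    using A r by (simp add: power2_eq_square algebra_simps real_sqrt_mult)
  thus ?thesis using t by (simp add: field_simps power2_eq_square)
qed

lemma DD_ge:
  assumes k: "k > 0" and M: "M > k"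
  shows "hh k \<le> DD M k" and "DD M k = hh k \<longleftrightarrow> M = k + sqrt (AA k / rr)"
proof -
  have A: "AA k > 0" using AA_pos k by simp
  have t: "M - k > 0" using M by simp
  have e: "DD M k - hh k = (sqrt (AA k) - sqrt rr * (M - k))^2 / (M - k)"
    unfolding DD_eq hh_def using amgm[OF A t rr] by (simp add: algebra_simps)
  show "hh k \<le> DD M k" using e t by (metis diff_ge_0_iff_ge divide_nonneg_pos zero_le_power2)
  have "DD M k = hh k \<longleftrightarrow> sqrt (AA k) - sqrt rr * (M - k) = 0" using e t by auto
  also have "\<dots> \<longleftrightarrow> M - k = sqrt (AA k) / sqrt rr" using rr by (auto simp: field_simps)
  also have "\<dots> \<longleftrightarrow> M = k + sqrt (AA k / rr)" by (auto simp: real_sqrt_divide)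
  finally show "DD M k = hh k \<longleftrightarrow> M = k + sqrt (AA k / rr)" .
qed

lemma hh_pos: "k > 0 \<Longrightarrow> hh k > 0"
proof -
  assume k: "k > 0"
  have "sqrt (AA k * rr) \<ge> 0" using AA_pos[OF k] rr by simp
  moreover have "k * rr > 0" "k * rd > 0" using k rr rd by auto
  ultimately show ?thesis unfolding hh_def using rs by linarith
qed

lemma zeta_eq: "k > 0 \<Longrightarrow> M > k \<Longrightarrow> zeta_csi al rr rd rs M k R = R / DD M k"
  unfolding zeta_csi_def DD_def by simp

definition "M0 = K0 + sqrt (AA K0 / rr)"

lemma Kcsi_eq:
  assumes kmd: "km = Kmax rr rd r0 T"
  shows "Kcsi al rr rd rs r0 T R = K0"
proof -
  let ?P = "\<lambda>p. csi_feasible km p \<and>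
        (\<forall>q. csi_feasible km q \<longrightarrow>
           zeta_csi al rr rd rs (fst q) (snd q) R \<le> zeta_csi al rr rd rs (fst p) (snd p) R)"
  have K0p: "K0 > 0" using K0_range by simp
  have AK: "AA K0 > 0" using AA_pos K0p by simp
  have M0: "M0 > K0" unfolding M0_def using AK rr by simp
  have D0: "DD M0 K0 = hh K0" using DD_ge(2)[OF K0p M0] by (simp add: M0_def)
  have feas: "\<And>q. csi_feasible km q \<Longrightarrow> snd q > 0 \<and> fst q > snd q \<and> 1 \<le> snd q \<and> snd q \<le> km"
    unfolding csi_feasible_def by auto
  have lemD: "\<And>q. csi_feasible km q \<Longrightarrow> hh K0 \<le> DD (fst q) (snd q)"
  proof -
    fix q assume q: "csi_feasible km q"
    have "hh K0 \<le> hh (snd q)" using hh_min[of "snd q"] feas[OF q]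
      by (cases "snd q = K0") (auto intro: less_imp_le)
    also have "\<dots> \<le> DD (fst q) (snd q)" using DD_ge(1) feas[OF q] by auto
    finally show "hh K0 \<le> DD (fst q) (snd q)" .
  qed
  have zle: "\<And>a b. a > 0 \<Longrightarrow> b > 0 \<Longrightarrow> R / a \<le> R / b \<longleftrightarrow> b \<le> a"
    using R by (simp add: divide_le_cancel frac_le_eq field_simps)
  have Dpos: "\<And>q. csi_feasible km q \<Longrightarrow> DD (fst q) (snd q) > 0"
    using lemD hh_pos K0p by (meson less_le_trans)
  have P0: "?P (M0, K0)"
  proof
    show "csi_feasible km (M0, K0)" unfolding csi_feasible_def using K0_range M0 by auto
    show "\<forall>q. csi_feasible km q \<longrightarrow>
           zeta_csi al rr rd rs (fst q) (snd q) R \<le> zeta_csi al rr rd rs (fst (M0, K0)) (snd (M0, K0)) R"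
    proof (intro allI impI)
      fix q assume q: "csi_feasible km q"
      have "zeta_csi al rr rd rs (fst q) (snd q) R = R / DD (fst q) (snd q)"
        using feas[OF q] zeta_eq by auto
      moreover have "zeta_csi al rr rd rs M0 K0 R = R / DD M0 K0" using zeta_eq K0p M0 by auto
      ultimately show "zeta_csi al rr rd rs (fst q) (snd q) R \<le> zeta_csi al rr rd rs (fst (M0, K0)) (snd (M0, K0)) R"
        using zle Dpos[OF q] lemD[OF q] D0 hh_pos[OF K0p] by simp
    qed
  qed
  have uniq: "\<And>p. ?P p \<Longrightarrow> p = (M0, K0)"
  proof -
    fix p assume Pp: "?P p"
    have fp: "csi_feasible km p" using Pp by simp
    have "zeta_csi al rr rd rs M0 K0 R \<le> zeta_csi al rr rd rs (fst p) (snd p) R"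
      using Pp P0 by (metis fst_conv snd_conv)
    moreover have "zeta_csi al rr rd rs (fst p) (snd p) R = R / DD (fst p) (snd p)"
      using feas[OF fp] zeta_eq by auto
    moreover have "zeta_csi al rr rd rs M0 K0 R = R / DD M0 K0" using zeta_eq K0p M0 by auto
    ultimately have le: "DD (fst p) (snd p) \<le> hh K0"
      using zle Dpos[OF fp] D0 hh_pos[OF K0p] by simp
    have s: "snd p = K0"
    proof (rule ccontr)
      assume "snd p \<noteq> K0"
      hence "hh K0 < hh (snd p)" using hh_min feas[OF fp] by auto
      also have "\<dots> \<le> DD (fst p) (snd p)" using DD_ge(1) feas[OF fp] by auto
      finally show False using le by simp
    qed
    have "DD (fst p) (snd p) = hh (snd p)"
      using le lemD[OF fp] s by simp
    hence "fst p = M0" using DD_ge(2)[of "snd p" "fst p"] feas[OF fp] s by (simp add: M0_def)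
    thus "p = (M0, K0)" using s by (simp add: prod_eq_iff)
  qed
  have "(THE p. ?P p) = (M0, K0)" using P0 uniq by (rule the_equality)
  thus ?thesis unfolding Kcsi_def kmd[symmetric] by simp
qed

lemma final:
  assumes kmd: "km = Kmax rr rd r0 T"
  shows "(R < Rmax al rr rd r0 T \<longleftrightarrow> R / xprime al rr rd R < Kmax rr rd r0 T) \<and>
      (R / xprime al rr rd R < Kmax rr rd r0 T \<longleftrightarrow> Kcsi al rr rd rs r0 T R < Kmax rr rd r0 T) \<and>
      (rr < al / (1 + rd / rr)^2 * (g R)^2 / R \<longleftrightarrow> Kcsi al rr rd rs r0 T R > 1)"
proof -
  have xpe: "xprime al rr rd R = xp" unfolding xprime_def xp_def c0_def ..
  define c1 where "c1 = (1 + rd / rr) * sqrt (km * rr / al)"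
  have c1: "c1 > 0" unfolding c1_def using al rr rd km by (intro mult_pos_pos) (auto simp: add_pos_pos)
  define ct where "ct = cTheta al rr rd r0 T"
  have "\<exists>!c. c > 0 \<and> g c / sqrt c = c1" by (rule phi_sol[OF c1])
  hence "ct > 0 \<and> g ct / sqrt ct = c1" unfolding ct_def cTheta_def kmd[symmetric] c1_def by (rule theI')
  hence ct: "ct > 0" "g ct / sqrt ct = c1" by auto
  define y where "y = R / km"
  have y: "y > 0" unfolding y_def using R km by simp
  have c0c1: "c0 = sqrt y * c1"
  proof -
    have "sqrt y * sqrt (km * rr / al) = sqrt (y * (km * rr / al))" by (simp only: real_sqrt_mult)
    also have "y * (km * rr / al) = R * rr / al" unfolding y_def using km by (simp add: field_simps)
    finally show ?thesis unfolding c0_def c1_def by (simp add: mult_ac)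
  qed
  have a: "R < Rmax al rr rd r0 T \<longleftrightarrow> R / xp < km"
  proof -
    have "R < Rmax al rr rd r0 T \<longleftrightarrow> y < ct"
      unfolding Rmax_def ct_def[symmetric] kmd[symmetric] y_def using km by (simp add: field_simps)
    also have "\<dots> \<longleftrightarrow> g y / sqrt y < c1" using phi_less_iff[OF y ct(1)] ct(2) by simp
    also have "\<dots> \<longleftrightarrow> g y < c0" unfolding c0c1 using y by (simp add: field_simps)
    also have "\<dots> \<longleftrightarrow> y < xp" using g_less_iff[OF y xp(1)] xp(2) by simp
    also have "\<dots> \<longleftrightarrow> R / xp < km" unfolding y_def using km xp(1) by (simp add: field_simps)
    finally show ?thesis .
  qed
  have K0e: "Kcsi al rr rd rs r0 T R = K0" by (rule Kcsi_eq[OF kmd])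
  have b: "R / xp < km \<longleftrightarrow> K0 < km" unfolding K0_def using km by (auto simp: max_def min_def)
  have c: "rr < al / (1 + rd / rr)^2 * (g R)^2 / R \<longleftrightarrow> K0 > 1"
  proof -
    have B: "(1 + rd / rr) > 0" using rr rd by (simp add: add_pos_pos)
    have "K0 > 1 \<longleftrightarrow> R / xp > 1" unfolding K0_def using km by (auto simp: max_def min_def)
    also have "\<dots> \<longleftrightarrow> xp < R" using xp(1) by (simp add: field_simps)
    also have "\<dots> \<longleftrightarrow> c0 < g R" using g_less_iff[OF xp(1) R] xp(2) by simp
    also have "\<dots> \<longleftrightarrow> c0^2 < (g R)^2" using c0_pos g_pos[OF R] by (rule sq_less)
    also have "c0^2 = (1 + rd / rr)^2 * (R * rr / al)" unfolding c0_def using R rr al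
      by (simp add: power_mult_distrib)
    also have "(1 + rd / rr)^2 * (R * rr / al) < (g R)^2 \<longleftrightarrow> rr < al / (1 + rd / rr)^2 * (g R)^2 / R"
      using B al R by (intro t2) auto
    finally show ?thesis by simp
  qed
  show ?thesis using a b c K0e xpe kmd by simp
qed

end

theorem lemma5:
  fixes alpha rho_r rho_d rho_s rho_0 T :: real
  assumes "alpha > 1" and "rho_r > 0" and "rho_d > 0" and "rho_s > 0" and "rho_0 > 0"
    and "T > 1" and "Kmax rho_r rho_d rho_0 T > 10"
  shows "\<forall>R::real. R > 0 \<longrightarrow>
     ((R < Rmax alpha rho_r rho_d rho_0 T \<longleftrightarrow>
         R / xprime alpha rho_r rho_d R < Kmax rho_r rho_d rho_0 T) \<and>
      (R / xprime alpha rho_r rho_d R < Kmax rho_r rho_d rho_0 T \<longleftrightarrow>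
         Kcsi alpha rho_r rho_d rho_s rho_0 T R < Kmax rho_r rho_d rho_0 T) \<and>
      (rho_r < alpha / (1 + rho_d / rho_r)^2 * (g R)^2 / R \<longleftrightarrow>
         Kcsi alpha rho_r rho_d rho_s rho_0 T R > 1))"
proof (intro allI impI)
  fix R :: real assume R: "R > 0"
  show "(R < Rmax alpha rho_r rho_d rho_0 T \<longleftrightarrow>
         R / xprime alpha rho_r rho_d R < Kmax rho_r rho_d rho_0 T) \<and>
      (R / xprime alpha rho_r rho_d R < Kmax rho_r rho_d rho_0 T \<longleftrightarrow>
         Kcsi alpha rho_r rho_d rho_s rho_0 T R < Kmax rho_r rho_d rho_0 T) \<and>
      (rho_r < alpha / (1 + rho_d / rho_r)^2 * (g R)^2 / R \<longleftrightarrow>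
         Kcsi alpha rho_r rho_d rho_s rho_0 T R > 1)"
  proof -
    have al: "alpha > 0" using assms(1) by simp
    have km: "Kmax rho_r rho_d rho_0 T > 1" using assms(7) by simp
    show ?thesis by (rule final[OF al assms(2) assms(3) assms(4) km R refl])
  qed
qed

end
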